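(* Let $A,B,C,Q,R,\gamma$ be as in the context. For all $\mu_1,\mu_2$ with $0<\mu_1\le\mu_2\le 1$, $$\bar P_\infty(\mu_1)\preccurlyeq\bar P_\infty(\mu_2)\quad\text{and}\quad \hat P_\infty(\mu_1)\succcurlyeq\hat P_\infty(\mu_2).$$
   Context: $A\in\mathbb{R}^{n_x\times n_x}$, $B\in\mathbb{R}^{n_x\times n_u}$, $C\in\mathbb{R}^{n_c\times n_x}$, $Q\succcurlyeq 0$, $R\succ 0$, $\gamma\in(0,1)$, with $(A,B)$ controllable and $(A,Q^{1/2})$ observable. For $\mu\in(0,1]$, consider the iteration, started from $\bar P_0=\hat P_0=0$ (any positive semidefinite start gives the same limits): $L_{i+1}=-[\mu R+B^\top\Sigma_iB]^{-1}B^\top\Sigma_iA$, $\bar P_{i+1}=C^\top C+\gamma(A+BL_{i+1})^\top\bar P_i(A+BL_{i+1})$, $\hat P_{i+1}=Q+L_{i+1}^\top RL_{i+1}+(A+BL_{i+1})^\top\hat P_i(A+BL_{i+1})$, with $\Sigma_i=\gamma(1-\mu)\bar P_i+\mu\hat P_i$. Under the stated assumptions the limits $\bar P_\infty(\mu)\succcurlyeq0$, $\hat P_\infty(\mu)\succ0$, $L_\infty(\mu)$ exist, $A+BL_\infty(\mu)$ is strictly stable, and for every $x_0$, $x_0^\top((1-\mu)\bar P_\infty(\mu)+\mu\hat P_\infty(\mu))x_0$ is the optimal value of the deterministic problem $\min_{\bar u_0,\bar u_1,\ldots}(1-\mu)\sum_{i\ge0}\gamma^i\|C\bar x_i\|^2+\mu\sum_{i\ge0}(\bar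 x_i^\top Q\bar x_i+\bar u_i^\top R\bar u_i)$ subject to $\bar x_{i+1}=A\bar x_i+B\bar u_i$, $\bar x_0=x_0$. $\preccurlyeq$ is the Loewner order. *)

theory Defs
  imports "HOL-Analysis.Analysis"
begin

fun mpow :: "real^'n^'n \<Rightarrow> nat \<Rightarrow> real^'n^'n" where
  "mpow M 0 = mat 1"
| "mpow M (Suc k) = M ** mpow M k"

definition psd :: "real^'n^'n \<Rightarrow> bool" where
  "psd M \<longleftrightarrow> transpose M = M \<and> (\<forall>x. 0 \<le> x \<bullet> (M *v x))"

definition pd :: "real^'n^'n \<Rightarrow> bool" where
  "pd M \<longleftrightarrow> transpose M = M \<and> (\<forall>x. x \<noteq> 0 \<longrightarrow> 0 < x \<bullet> (M *v x))"

definition loewner_le :: "real^'n^'n \<Rightarrow> real^'n^'n \<Rightarrow> bool" where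
  "loewner_le M1 M2 \<longleftrightarrow> psd (M2 - M1)"

text \<open>(A,B) controllable: the controllability matrix [B, AB, ..., A^(n-1) B] has full row rank,
  i.e. its columns span the state space.\<close>
definition controllable :: "real^'n^'n \<Rightarrow> real^'m^'n \<Rightarrow> bool" where
  "controllable A B \<longleftrightarrow>
     span {mpow A k *v (B *v u) | k u. k < CARD('n)} = UNIV"

definition observable :: "real^'n^'n \<Rightarrow> real^'n^'p \<Rightarrow> bool" where
  "observable A Cm \<longleftrightarrow> (\<forall>x. (\<forall>k < CARD('n). Cm *v (mpow A k *v x) = 0) \<longrightarrow> x = 0)"

definition SigmaM :: "real \<Rightarrow> real \<Rightarrow> real^'n^'n \<Rightarrow> real^'n^'n \<Rightarrow> real^'n^'n" where
  "SigmaM \<gamma> \<mu> Pb Ph = (\<gamma> * (1 - \<mu>)) *\<^sub>R Pb + \<mu> *\<^sub>R Ph"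

definition gainL :: "real^'n^'n \<Rightarrow> real^'m^'n \<Rightarrow> real^'m^'m \<Rightarrow> real \<Rightarrow> real^'n^'n \<Rightarrow> real^'n^'m" where
  "gainL A B R \<mu> S = - (matrix_inv (\<mu> *\<^sub>R R + transpose B ** S ** B) ** transpose B ** S ** A)"

fun iterP :: "real^'n^'n \<Rightarrow> real^'m^'n \<Rightarrow> real^'n^'c \<Rightarrow> real^'n^'n \<Rightarrow> real^'m^'m
              \<Rightarrow> real \<Rightarrow> real \<Rightarrow> nat \<Rightarrow> (real^'n^'n) \<times> (real^'n^'n)" where
  "iterP A B C Q R \<gamma> \<mu> 0 = (0, 0)"
| "iterP A B C Q R \<gamma> \<mu> (Suc i) =
     (let (Pb, Ph) = iterP A B C Q R \<gamma> \<mu> i;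
          L = gainL A B R \<mu> (SigmaM \<gamma> \<mu> Pb Ph);
          F = A + B ** L
      in (transpose C ** C + \<gamma> *\<^sub>R (transpose F ** Pb ** F),
          Q + transpose L ** R ** L + transpose F ** Ph ** F))"

definition Pbar_inf :: "real^'n^'n \<Rightarrow> real^'m^'n \<Rightarrow> real^'n^'c \<Rightarrow> real^'n^'n \<Rightarrow> real^'m^'m
              \<Rightarrow> real \<Rightarrow> real \<Rightarrow> real^'n^'n" where
  "Pbar_inf A B C Q R \<gamma> \<mu> = lim (\<lambda>i. fst (iterP A B C Q R \<gamma> \<mu> i))"

definition Phat_inf :: "real^'n^'n \<Rightarrow> real^'m^'n \<Rightarrow> real^'n^'c \<Rightarrow> real^'n^'n \<Rightarrow> real^'m^'m
              \<Rightarrow> real \<Rightarrow> real \<Rightarrow> real^'n^'n" where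
  "Phat_inf A B C Q R \<gamma> \<mu> = lim (\<lambda>i. snd (iterP A B C Q R \<gamma> \<mu> i))"

fun traj :: "real^'n^'n \<Rightarrow> real^'m^'n \<Rightarrow> real^'n \<Rightarrow> (nat \<Rightarrow> real^'m) \<Rightarrow> nat \<Rightarrow> real^'n" where
  "traj A B x0 u 0 = x0"
| "traj A B x0 u (Suc i) = A *v traj A B x0 u i + B *v u i"

text \<open>Cost (possibly infinite) of input sequence u; all summands are nonnegative under the
  standing assumptions Q psd, R pd.\<close>
definition cost :: "real^'n^'n \<Rightarrow> real^'m^'n \<Rightarrow> real^'n^'c \<Rightarrow> real^'n^'n \<Rightarrow> real^'m^'m
              \<Rightarrow> real \<Rightarrow> real \<Rightarrow> real^'n \<Rightarrow> (nat \<Rightarrow> real^'m) \<Rightarrow> ennreal" where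
  "cost A B C Q R \<gamma> \<mu> x0 u =
     ennreal (1 - \<mu>) * (\<Sum>i. ennreal (\<gamma> ^ i * (norm (C *v traj A B x0 u i))\<^sup>2))
   + ennreal \<mu> * (\<Sum>i. ennreal (traj A B x0 u i \<bullet> (Q *v traj A B x0 u i) + u i \<bullet> (R *v u i)))"

definition optval :: "real^'n^'n \<Rightarrow> real^'m^'n \<Rightarrow> real^'n^'c \<Rightarrow> real^'n^'n \<Rightarrow> real^'m^'m
              \<Rightarrow> real \<Rightarrow> real \<Rightarrow> real^'n \<Rightarrow> ennreal" where
  "optval A B C Q R \<gamma> \<mu> x0 = (INF u. cost A B C Q R \<gamma> \<mu> x0 u)"

end

theory Submission
  imports Defs
begin

lemma tendsto_matmul:
  fixes X :: "'a \<Rightarrow> real^'n^'m" and Y :: "'a \<Rightarrow> real^'k^'n"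
  assumes "(X \<longlongrightarrow> A) F" "(Y \<longlongrightarrow> B) F"
  shows "((\<lambda>x. X x ** Y x) \<longlongrightarrow> A ** B) F"
  unfolding matrix_matrix_mult_def
  by (intro tendsto_vec_lambda tendsto_sum tendsto_mult tendsto_vec_nth assms)

lemma tendsto_mv:
  fixes X :: "'a \<Rightarrow> real^'n^'m"
  assumes "(X \<longlongrightarrow> A) F"
  shows "((\<lambda>x. X x *v v) \<longlongrightarrow> A *v v) F"
  unfolding matrix_vector_mult_def
  by (intro tendsto_vec_lambda tendsto_sum tendsto_mult tendsto_vec_nth assms tendsto_const)

lemma tendsto_transpose:
  fixes X :: "'a \<Rightarrow> real^'n^'m"
  assumes "(X \<longlongrightarrow> A) F"
  shows "((\<lambda>x. transpose (X x)) \<longlongrightarrow> transpose A) F"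
  unfolding transpose_def
  by (intro tendsto_vec_lambda tendsto_vec_nth assms)

lemma tendsto_det:
  fixes X :: "'a \<Rightarrow> real^'n^'n"
  assumes "(X \<longlongrightarrow> A) F"
  shows "((\<lambda>x. det (X x)) \<longlongrightarrow> det A) F"
  unfolding det_def
  by (intro tendsto_sum tendsto_mult tendsto_prod tendsto_vec_nth assms tendsto_const)

lemma matrix_inv_props:
  fixes A :: "real^'n^'n"
  assumes "invertible A"
  shows "A ** matrix_inv A = mat 1" "matrix_inv A ** A = mat 1"
proof -
  have "\<exists>A'. A ** A' = mat 1 \<and> A' ** A = mat 1" using assms unfolding invertible_def by blast
  from someI_ex[OF this] show "A ** matrix_inv A = mat 1" "matrix_inv A ** A = mat 1"
    unfolding matrix_inv_def by auto
qed

lemma matrix_inv_formula: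
  fixes A :: "real^'n^'n"
  assumes "det A \<noteq> 0"
  shows "matrix_inv A $ i $ j = det (\<chi> a b. if b = i then axis j 1 $ a else A $ a $ b) / det A"
proof -
  have inv: "invertible A" using assms invertible_det_nz by blast
  let ?x = "column j (matrix_inv A)"
  have "A *v ?x = axis j 1"
  proof -
    have "A *v ?x = column j (A ** matrix_inv A)"
      by (simp add: vec_eq_iff matrix_matrix_mult_def matrix_vector_mult_def column_def)
    also have "\<dots> = axis j 1" using matrix_inv_props(1)[OF inv]
      by (simp add: vec_eq_iff mat_def axis_def column_def)
    finally show ?thesis .
  qed
  from cramer[OF assms] this have "?x = (\<chi> k. det(\<chi> a b. if b=k then axis j 1 $ a else A$a$b) / det A)"
    by blast
  then have "?x $ i = det(\<chi> a b. if b=i then axis j 1 $ a else A$a$b) / det A" by simp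
  then show ?thesis by (simp add: column_def)
qed

lemma tendsto_matinv:
  fixes X :: "'a \<Rightarrow> real^'n^'n"
  assumes X: "(X \<longlongrightarrow> A) F" and inv: "invertible A"
  shows "((\<lambda>x. matrix_inv (X x)) \<longlongrightarrow> matrix_inv A) F"
proof -
  have dA: "det A \<noteq> 0" using inv invertible_det_nz by blast
  have ev: "eventually (\<lambda>x. det (X x) \<noteq> 0) F"
    using tendsto_det[OF X] dA by (simp add: tendsto_imp_eventually_ne)
  show ?thesis
  proof (rule vec_tendstoI, rule vec_tendstoI)
    fix i j
    have mt: "((\<lambda>x. (\<chi> a b. if b = i then axis j 1 $ a else X x $ a $ b)) \<longlongrightarrow>
            (\<chi> a b. if b = i then axis j 1 $ a else A $ a $ b)) F"
    proof (intro tendsto_vec_lambda)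
      fix a b show "((\<lambda>x. if b = i then axis j 1 $ a else X x $ a $ b) \<longlongrightarrow>
             (if b = i then axis j 1 $ a else A $ a $ b)) F"
        by (cases "b = i") (simp_all add: tendsto_vec_nth X)
    qed
    have "((\<lambda>x. det (\<chi> a b. if b = i then axis j 1 $ a else X x $ a $ b) / det (X x)) \<longlongrightarrow>
           det (\<chi> a b. if b = i then axis j 1 $ a else A $ a $ b) / det A) F"
      by (intro tendsto_divide tendsto_det[OF mt] tendsto_det[OF X] dA)
    then show "((\<lambda>x. matrix_inv (X x) $ i $ j) \<longlongrightarrow> matrix_inv A $ i $ j) F"
      using matrix_inv_formula[OF dA, of i j]
      by (auto intro: Lim_transform_eventually[OF _ eventually_mono[OF ev]] simp: matrix_inv_formula)
  qed
qed


lemma inner_transpose: "(x::real^'n) \<bullet> (transpose M *v y) = (M *v x) \<bullet> y"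
  by (metis transpose_matrix_vector dot_lmul_matrix inner_commute)

lemma quad_congr:
  "(x::real^'n) \<bullet> ((transpose F ** P ** F) *v x) = (F *v x) \<bullet> (P *v (F *v x))"
proof -
  have "(transpose F ** P ** F) *v x = transpose F *v (P *v (F *v x))"
    by (metis matrix_vector_mul_assoc)
  then show ?thesis by (simp only: inner_transpose)
qed

lemma scaleR_mv: "(c *\<^sub>R (P::real^'n^'m)) *v x = c *\<^sub>R (P *v x)"
  by (simp add: vec_eq_iff matrix_vector_mult_def sum_distrib_left mult.assoc)

lemma transpose_add: "transpose (A + B) = transpose A + transpose (B::real^'n^'m)"
  by (simp add: transpose_def vec_eq_iff)

lemma transpose_diff: "transpose (A - B) = transpose A - transpose (B::real^'n^'m)"
  by (simp add: transpose_def vec_eq_iff)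

lemma psd_add: "psd P \<Longrightarrow> psd Q \<Longrightarrow> psd (P + Q)"
  unfolding psd_def by (simp add: transpose_add matrix_vector_mult_add_rdistrib inner_add_right add_nonneg_nonneg)

lemma psd_scale: "psd P \<Longrightarrow> 0 \<le> c \<Longrightarrow> psd (c *\<^sub>R P)"
  unfolding psd_def by (simp add: transpose_scalar scaleR_mv)

lemma psd_congr: "psd P \<Longrightarrow> psd (transpose F ** P ** F)"
  unfolding psd_def by (simp add: quad_congr matrix_transpose_mul matrix_mul_assoc)

lemma psd_CtC: "psd (transpose C ** (C::real^'n^'m))"
proof -
  have "x \<bullet> ((transpose C ** C) *v x) = (C *v x) \<bullet> (C *v x)" for x
    by (metis matrix_vector_mul_assoc inner_transpose)
  then show ?thesis unfolding psd_def by (simp add: matrix_transpose_mul)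
qed

lemma psd_zero: "psd (0::real^'n^'n)"
  unfolding psd_def by (simp add: transpose_def vec_eq_iff)

lemma pd_psd: "pd P \<Longrightarrow> psd P"
  unfolding pd_def psd_def by (metis inner_zero_left order_le_less)

lemma pd_invertible:
  fixes M :: "real^'n^'n"
  assumes "pd M" shows "invertible M"
proof -
  have "\<forall>x. M *v x = 0 \<longrightarrow> x = 0"
    using assms unfolding pd_def by (metis inner_zero_right less_irrefl)
  then show ?thesis
    using matrix_left_invertible_ker invertible_left_inverse by blast
qed

lemma psd_limit:
  fixes X :: "nat \<Rightarrow> real^'n^'n"
  assumes X: "X \<longlonglongrightarrow> M" and p: "\<And>i. psd (X i)"
  shows "psd M"
  unfolding psd_def
proof (intro conjI allI)
  have "(\<lambda>i. transpose (X i)) \<longlonglongrightarrow> transpose M" by (rule tendsto_transpose[OF X])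
  moreover have "(\<lambda>i. transpose (X i)) = X" using p unfolding psd_def by auto
  ultimately show "transpose M = M" using X LIMSEQ_unique by metis
next
  fix x :: "real^'n"
  have "(\<lambda>i. x \<bullet> (X i *v x)) \<longlonglongrightarrow> x \<bullet> (M *v x)"
    by (intro tendsto_inner tendsto_const tendsto_mv X)
  then show "0 \<le> x \<bullet> (M *v x)"
    using p unfolding psd_def by (auto intro: LIMSEQ_le_const)
qed

lemma iter_psd:
  assumes Q: "psd Q" and R: "pd R" and g: "0 \<le> \<gamma>"
  shows "psd (fst (iterP A B C Q R \<gamma> \<mu> i)) \<and> psd (snd (iterP A B C Q R \<gamma> \<mu> i))"
proof (induction i)
  case 0 then show ?case by (simp add: psd_zero)
next
  case (Suc i)
  then show ?case
    by (simp add: split_def Let_def psd_add psd_scale psd_congr psd_CtC Q pd_psd[OF R] g)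
qed


lemma policy:
  fixes A :: "real^'nx^'nx" and B :: "real^'nu^'nx" and C :: "real^'nx^'nc"
    and Q :: "real^'nx^'nx" and R :: "real^'nu^'nu"
  assumes Q: "psd Q" and R: "pd R" and g: "0 \<le> \<gamma>" and m: "0 < \<mu>" "\<mu> \<le> 1"
    and c1: "convergent (\<lambda>i. fst (iterP A B C Q R \<gamma> \<mu> i))"
    and c2: "convergent (\<lambda>i. snd (iterP A B C Q R \<gamma> \<mu> i))"
  shows "\<exists>L. Pbar_inf A B C Q R \<gamma> \<mu> = transpose C ** C + \<gamma> *\<^sub>R (transpose (A + B ** L) ** Pbar_inf A B C Q R \<gamma> \<mu> ** (A + B ** L))
           \<and> Phat_inf A B C Q R \<gamma> \<mu> = Q + transpose L ** R ** L + transpose (A + B ** L) ** Phat_inf A B C Q R \<gamma> \<mu> ** (A + B ** L)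
           \<and> psd (Pbar_inf A B C Q R \<gamma> \<mu>) \<and> psd (Phat_inf A B C Q R \<gamma> \<mu>)"
proof -
  define Pb where "Pb i = fst (iterP A B C Q R \<gamma> \<mu> i)" for i
  define Ph where "Ph i = snd (iterP A B C Q R \<gamma> \<mu> i)" for i
  define Pbi where "Pbi = Pbar_inf A B C Q R \<gamma> \<mu>"
  define Phi where "Phi = Phat_inf A B C Q R \<gamma> \<mu>"
  have Pbt: "Pb \<longlonglongrightarrow> Pbi" using c1 unfolding Pb_def Pbi_def Pbar_inf_def convergent_LIMSEQ_iff .
  have Pht: "Ph \<longlonglongrightarrow> Phi" using c2 unfolding Ph_def Phi_def Phat_inf_def convergent_LIMSEQ_iff .
  have ps: "psd (Pb i)" "psd (Ph i)" for i using iter_psd[OF Q R g, of A B C \<mu> i] unfolding Pb_def Ph_def by auto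
  have psi: "psd Pbi" "psd Phi" using psd_limit[OF Pbt ps(1)] psd_limit[OF Pht ps(2)] by auto
  define S where "S i = SigmaM \<gamma> \<mu> (Pb i) (Ph i)" for i
  define Si where "Si = SigmaM \<gamma> \<mu> Pbi Phi"
  have St: "S \<longlonglongrightarrow> Si" unfolding S_def Si_def SigmaM_def
    by (intro tendsto_intros Pbt Pht)
  have psdSi: "psd Si" unfolding Si_def SigmaM_def
    using psi m g by (intro psd_add psd_scale) auto
  have pdM: "pd (\<mu> *\<^sub>R R + transpose B ** Si ** B)"
  proof -
    have "psd (transpose B ** Si ** B)" by (rule psd_congr[OF psdSi])
    then show ?thesis using R m unfolding pd_def psd_def
      by (auto simp: transpose_add transpose_scalar scaleR_mv matrix_vector_mult_add_rdistrib
          inner_add_right add_pos_nonneg)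
  qed
  define L where "L i = gainL A B R \<mu> (S i)" for i
  define Li where "Li = gainL A B R \<mu> Si"
  have Lt: "L \<longlonglongrightarrow> Li" unfolding L_def Li_def gainL_def
    by (intro tendsto_minus tendsto_matmul tendsto_matinv pd_invertible[OF pdM]
          tendsto_add tendsto_const tendsto_transpose St)
  have rec1: "Pb (Suc i) = transpose C ** C + \<gamma> *\<^sub>R (transpose (A + B ** L i) ** Pb i ** (A + B ** L i))" for i
    unfolding Pb_def L_def S_def Ph_def by (simp add: split_def Let_def)
  have rec2: "Ph (Suc i) = Q + transpose (L i) ** R ** L i + transpose (A + B ** L i) ** Ph i ** (A + B ** L i)" for i
    unfolding Pb_def L_def S_def Ph_def by (simp add: split_def Let_def)
  have "(\<lambda>i. Pb (Suc i)) \<longlonglongrightarrow> Pbi" using Pbt by (rule LIMSEQ_Suc)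
  moreover have "(\<lambda>i. Pb (Suc i)) \<longlonglongrightarrow> transpose C ** C + \<gamma> *\<^sub>R (transpose (A + B ** Li) ** Pbi ** (A + B ** Li))"
    unfolding rec1 by (intro tendsto_add tendsto_scaleR tendsto_matmul tendsto_transpose tendsto_const Lt Pbt)
  ultimately have e1: "Pbi = transpose C ** C + \<gamma> *\<^sub>R (transpose (A + B ** Li) ** Pbi ** (A + B ** Li))"
    by (rule LIMSEQ_unique)
  have "(\<lambda>i. Ph (Suc i)) \<longlonglongrightarrow> Phi" using Pht by (rule LIMSEQ_Suc)
  moreover have "(\<lambda>i. Ph (Suc i)) \<longlonglongrightarrow> Q + transpose Li ** R ** Li + transpose (A + B ** Li) ** Phi ** (A + B ** Li)"
    unfolding rec2 by (intro tendsto_add tendsto_scaleR tendsto_matmul tendsto_transpose tendsto_const Lt Pht)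
  ultimately have e2: "Phi = Q + transpose Li ** R ** Li + transpose (A + B ** Li) ** Phi ** (A + B ** Li)"
    by (rule LIMSEQ_unique)
  show ?thesis using e1 e2 psi unfolding Pbi_def Phi_def by blast
qed


lemma ennreal_suminf_bound:
  assumes "\<And>k. 0 \<le> g k" "\<And>N. (\<Sum>k<N. g k) \<le> c"
  shows "(\<Sum>k. ennreal (g k)) \<le> ennreal c"
  unfolding suminf_eq_SUP
proof (rule SUP_least)
  fix N show "(\<Sum>k<N. ennreal (g k)) \<le> ennreal c"
    using assms by (simp add: ennreal_leI)
qed

lemma closed_loop:
  fixes A :: "real^'nx^'nx" and B :: "real^'nu^'nx" and C :: "real^'nx^'nc"
    and Q :: "real^'nx^'nx" and R :: "real^'nu^'nu" and L :: "real^'nx^'nu"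
  assumes e1: "Pb = transpose C ** C + \<gamma> *\<^sub>R (transpose (A + B ** L) ** Pb ** (A + B ** L))"
    and e2: "Ph = Q + transpose L ** R ** L + transpose (A + B ** L) ** Ph ** (A + B ** L)"
    and pb: "psd Pb" and ph: "psd Ph" and g: "0 \<le> \<gamma>" and Q: "psd Q" and R: "pd R"
  shows "\<exists>u. (\<Sum>i. ennreal (\<gamma> ^ i * (norm (C *v traj A B x u i))\<^sup>2)) \<le> ennreal (x \<bullet> (Pb *v x))
           \<and> (\<Sum>i. ennreal (traj A B x u i \<bullet> (Q *v traj A B x u i) + u i \<bullet> (R *v u i))) \<le> ennreal (x \<bullet> (Ph *v x))"
proof -
  define F where "F = A + B ** L"
  define xs where "xs k = ((*v) F ^^ k) x" for k
  define u where "u k = L *v xs k" for k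
  have xsS: "xs (Suc k) = F *v xs k" for k unfolding xs_def by simp
  have tr: "traj A B x u k = xs k" for k
  proof (induction k)
    case 0 then show ?case by (simp add: xs_def)
  next
    case (Suc k) then show ?case
      by (simp add: xsS F_def u_def matrix_vector_mult_add_rdistrib matrix_vector_mul_assoc)
  qed
  have st1: "y \<bullet> (Pb *v y) = (norm (C *v y))\<^sup>2 + \<gamma> * ((F *v y) \<bullet> (Pb *v (F *v y)))" for y
  proof -
    have "y \<bullet> (Pb *v y) = y \<bullet> ((transpose C ** C) *v y) + \<gamma> * (y \<bullet> ((transpose F ** Pb ** F) *v y))"
      by (subst e1) (simp add: F_def matrix_vector_mult_add_rdistrib scaleR_mv inner_add_right)
    also have "\<dots> = (norm (C *v y))\<^sup>2 + \<gamma> * ((F *v y) \<bullet> (Pb *v (F *v y)))"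
      using quad_congr[of y F "mat 1"] quad_congr[of y F Pb] quad_congr[of y C "mat 1"]
      by (simp add: power2_norm_eq_inner)
    finally show ?thesis .
  qed
  have st2: "y \<bullet> (Ph *v y) = (y \<bullet> (Q *v y) + (L *v y) \<bullet> (R *v (L *v y))) + ((F *v y) \<bullet> (Ph *v (F *v y)))" for y
  proof -
    have "y \<bullet> (Ph *v y) = y \<bullet> (Q *v y) + y \<bullet> ((transpose L ** R ** L) *v y) + y \<bullet> ((transpose F ** Ph ** F) *v y)"
      by (subst e2) (simp add: F_def matrix_vector_mult_add_rdistrib inner_add_right)
    then show ?thesis by (simp add: quad_congr)
  qed
  have id1: "x \<bullet> (Pb *v x) = (\<Sum>k<N. \<gamma> ^ k * (norm (C *v xs k))\<^sup>2) + \<gamma> ^ N * (xs N \<bullet> (Pb *v xs N))" for N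
  proof (induction N)
    case 0 then show ?case by (simp add: xs_def)
  next
    case (Suc N) then show ?case
      using st1[of "xs N"] by (simp add: xsS algebra_simps)
  qed
  have id2: "x \<bullet> (Ph *v x) = (\<Sum>k<N. xs k \<bullet> (Q *v xs k) + u k \<bullet> (R *v u k)) + (xs N \<bullet> (Ph *v xs N))" for N
  proof (induction N)
    case 0 then show ?case by (simp add: xs_def)
  next
    case (Suc N) then show ?case
      using st2[of "xs N"] by (simp add: xsS u_def algebra_simps)
  qed
  have b1: "(\<Sum>i. ennreal (\<gamma> ^ i * (norm (C *v traj A B x u i))\<^sup>2)) \<le> ennreal (x \<bullet> (Pb *v x))"
    unfolding tr
  proof (rule ennreal_suminf_bound)
    fix k show "0 \<le> \<gamma> ^ k * (norm (C *v xs k))\<^sup>2" using g by simp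
  next
    fix N
    have "0 \<le> \<gamma> ^ N * (xs N \<bullet> (Pb *v xs N))" using g pb unfolding psd_def by simp
    then show "(\<Sum>k<N. \<gamma> ^ k * (norm (C *v xs k))\<^sup>2) \<le> x \<bullet> (Pb *v x)" using id1[of N] by linarith
  qed
  have b2: "(\<Sum>i. ennreal (traj A B x u i \<bullet> (Q *v traj A B x u i) + u i \<bullet> (R *v u i))) \<le> ennreal (x \<bullet> (Ph *v x))"
    unfolding tr
  proof (rule ennreal_suminf_bound)
    fix k show "0 \<le> xs k \<bullet> (Q *v xs k) + u k \<bullet> (R *v u k)"
      using Q pd_psd[OF R] unfolding psd_def by (simp add: add_nonneg_nonneg)
  next
    fix N
    have "0 \<le> xs N \<bullet> (Ph *v xs N)" using ph unfolding psd_def by simp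
    then show "(\<Sum>k<N. xs k \<bullet> (Q *v xs k) + u k \<bullet> (R *v u k)) \<le> x \<bullet> (Ph *v x)" using id2[of N] by linarith
  qed
  show ?thesis using b1 b2 by blast
qed


lemma cost_bound:
  assumes m: "0 \<le> \<mu>" "\<mu> \<le> 1" and ab: "0 \<le> a" "0 \<le> b"
    and s1: "(\<Sum>i. ennreal (\<gamma> ^ i * (norm (C *v traj A B x u i))\<^sup>2)) \<le> ennreal a"
    and s2: "(\<Sum>i. ennreal (traj A B x u i \<bullet> (Q *v traj A B x u i) + u i \<bullet> (R *v u i))) \<le> ennreal b"
  shows "optval A B C Q R \<gamma> \<mu> x \<le> ennreal ((1 - \<mu>) * a + \<mu> * b)"
proof -
  have "optval A B C Q R \<gamma> \<mu> x \<le> cost A B C Q R \<gamma> \<mu> x u"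
    unfolding optval_def by (rule INF_lower) simp
  also have "\<dots> \<le> ennreal (1 - \<mu>) * ennreal a + ennreal \<mu> * ennreal b"
    unfolding cost_def by (intro add_mono mult_left_mono s1 s2) auto
  also have "\<dots> = ennreal ((1 - \<mu>) * a + \<mu> * b)"
    using m ab by (simp add: ennreal_mult ennreal_plus)
  finally show ?thesis .
qed

lemma quad_comb: "(x::real^'n) \<bullet> ((s *\<^sub>R P + t *\<^sub>R H) *v x) = s * (x \<bullet> (P *v x)) + t * (x \<bullet> (H *v x))"
  by (simp add: matrix_vector_mult_add_rdistrib scaleR_mv inner_add_right)

theorem lemma3:
  fixes A :: "real^'nx^'nx" and B :: "real^'nu^'nx" and C :: "real^'nx^'nc"
    and Q :: "real^'nx^'nx" and R :: "real^'nu^'nu" and \<gamma> \<mu>1 \<mu>2 :: real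
  assumes Q: "psd Q" and R: "pd R" and \<gamma>: "0 < \<gamma>" "\<gamma> < 1"
    and ctrb: "controllable A B"
    and obsv: "\<exists>S. psd S \<and> S ** S = Q \<and> observable A S"
    \<comment> \<open>standing facts from the context, valid for every \<mu> in (0,1]:\<close>
    and conv: "\<And>\<mu>. 0 < \<mu> \<Longrightarrow> \<mu> \<le> 1 \<Longrightarrow>
                 convergent (\<lambda>i. fst (iterP A B C Q R \<gamma> \<mu> i)) \<and>
                 convergent (\<lambda>i. snd (iterP A B C Q R \<gamma> \<mu> i))"
    and opt: "\<And>\<mu> x0. 0 < \<mu> \<Longrightarrow> \<mu> \<le> 1 \<Longrightarrow>
                 ennreal (x0 \<bullet> (((1 - \<mu>) *\<^sub>R Pbar_inf A B C Q R \<gamma> \<mu>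
                                  + \<mu> *\<^sub>R Phat_inf A B C Q R \<gamma> \<mu>) *v x0))
                 = optval A B C Q R \<gamma> \<mu> x0"
    and \<mu>: "0 < \<mu>1" "\<mu>1 \<le> \<mu>2" "\<mu>2 \<le> 1"
  shows "loewner_le (Pbar_inf A B C Q R \<gamma> \<mu>1) (Pbar_inf A B C Q R \<gamma> \<mu>2) \<and>
         loewner_le (Phat_inf A B C Q R \<gamma> \<mu>2) (Phat_inf A B C Q R \<gamma> \<mu>1)"
proof -
  define Pb1 where "Pb1 = Pbar_inf A B C Q R \<gamma> \<mu>1"
  define Pb2 where "Pb2 = Pbar_inf A B C Q R \<gamma> \<mu>2"
  define Ph1 where "Ph1 = Phat_inf A B C Q R \<gamma> \<mu>1"
  define Ph2 where "Ph2 = Phat_inf A B C Q R \<gamma> \<mu>2"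
  have m1: "0 < \<mu>1" "\<mu>1 \<le> 1" and m2: "0 < \<mu>2" "\<mu>2 \<le> 1" using \<mu> by auto
  have g: "0 \<le> \<gamma>" using \<gamma> by simp
  obtain L1 where P1:
    "Pb1 = transpose C ** C + \<gamma> *\<^sub>R (transpose (A + B ** L1) ** Pb1 ** (A + B ** L1))"
    "Ph1 = Q + transpose L1 ** R ** L1 + transpose (A + B ** L1) ** Ph1 ** (A + B ** L1)"
    "psd Pb1" "psd Ph1"
    using policy[OF Q R g m1] conv[OF m1] unfolding Pb1_def Ph1_def by blast
  obtain L2 where P2:
    "Pb2 = transpose C ** C + \<gamma> *\<^sub>R (transpose (A + B ** L2) ** Pb2 ** (A + B ** L2))"
    "Ph2 = Q + transpose L2 ** R ** L2 + transpose (A + B ** L2) ** Ph2 ** (A + B ** L2)"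
    "psd Pb2" "psd Ph2"
    using policy[OF Q R g m2] conv[OF m2] unfolding Pb2_def Ph2_def by blast
  have key: "x \<bullet> (Pb1 *v x) \<le> x \<bullet> (Pb2 *v x) \<and> x \<bullet> (Ph2 *v x) \<le> x \<bullet> (Ph1 *v x)" for x
  proof -
    define a1 where "a1 = x \<bullet> (Pb1 *v x)"
    define a2 where "a2 = x \<bullet> (Pb2 *v x)"
    define b1 where "b1 = x \<bullet> (Ph1 *v x)"
    define b2 where "b2 = x \<bullet> (Ph2 *v x)"
    have nn: "0 \<le> a1" "0 \<le> a2" "0 \<le> b1" "0 \<le> b2"
      using P1(3,4) P2(3,4) unfolding a1_def a2_def b1_def b2_def psd_def by auto
    obtain u1 where u1:
      "(\<Sum>i. ennreal (\<gamma> ^ i * (norm (C *v traj A B x u1 i))\<^sup>2)) \<le> ennreal a1"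
      "(\<Sum>i. ennreal (traj A B x u1 i \<bullet> (Q *v traj A B x u1 i) + u1 i \<bullet> (R *v u1 i))) \<le> ennreal b1"
      using closed_loop[OF P1(1,2,3,4) g Q R, of x] unfolding a1_def b1_def by blast
    obtain u2 where u2:
      "(\<Sum>i. ennreal (\<gamma> ^ i * (norm (C *v traj A B x u2 i))\<^sup>2)) \<le> ennreal a2"
      "(\<Sum>i. ennreal (traj A B x u2 i \<bullet> (Q *v traj A B x u2 i) + u2 i \<bullet> (R *v u2 i))) \<le> ennreal b2"
      using closed_loop[OF P2(1,2,3,4) g Q R, of x] unfolding a2_def b2_def by blast
    have o1: "optval A B C Q R \<gamma> \<mu>1 x = ennreal ((1 - \<mu>1) * a1 + \<mu>1 * b1)"
      using opt[OF m1, of x] unfolding a1_def b1_def Pb1_def Ph1_def quad_comb by simp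
    have o2: "optval A B C Q R \<gamma> \<mu>2 x = ennreal ((1 - \<mu>2) * a2 + \<mu>2 * b2)"
      using opt[OF m2, of x] unfolding a2_def b2_def Pb2_def Ph2_def quad_comb by simp
    have "ennreal ((1 - \<mu>1) * a1 + \<mu>1 * b1) \<le> ennreal ((1 - \<mu>1) * a2 + \<mu>1 * b2)"
      using cost_bound[of \<mu>1 a2 b2, OF _ _ nn(2,4) u2] m1 o1 by simp
    then have i1: "(1 - \<mu>1) * a1 + \<mu>1 * b1 \<le> (1 - \<mu>1) * a2 + \<mu>1 * b2"
      using m1 nn by (subst (asm) ennreal_le_iff) (auto intro: add_nonneg_nonneg)
    have "ennreal ((1 - \<mu>2) * a2 + \<mu>2 * b2) \<le> ennreal ((1 - \<mu>2) * a1 + \<mu>2 * b1)"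
      using cost_bound[of \<mu>2 a1 b1, OF _ _ nn(1,3) u1] m2 o2 by simp
    then have i2: "(1 - \<mu>2) * a2 + \<mu>2 * b2 \<le> (1 - \<mu>2) * a1 + \<mu>2 * b1"
      using m2 nn by (subst (asm) ennreal_le_iff) (auto intro: add_nonneg_nonneg)
    show ?thesis
    proof (cases "\<mu>1 = \<mu>2")
      case True then show ?thesis unfolding Pb1_def Pb2_def Ph1_def Ph2_def by simp
    next
      case False
      then have lt: "\<mu>1 < \<mu>2" using \<mu> by simp
      define E1 where "E1 = (1 - \<mu>1) * (a2 - a1) + \<mu>1 * (b2 - b1)"
      define E2 where "E2 = (1 - \<mu>2) * (a2 - a1) + \<mu>2 * (b2 - b1)"
      have E1: "0 \<le> E1" using i1 unfolding E1_def by (simp add: algebra_simps)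
      have E2: "E2 \<le> 0" using i2 unfolding E2_def by (simp add: algebra_simps)
      have "0 \<le> \<mu>2 * E1 - \<mu>1 * E2"
        using mult_nonneg_nonneg[OF _ E1, of \<mu>2] mult_nonneg_nonpos[OF _ E2, of \<mu>1] m1 m2 by linarith
      also have "\<mu>2 * E1 - \<mu>1 * E2 = (\<mu>2 - \<mu>1) * (a2 - a1)"
        unfolding E1_def E2_def by (simp add: algebra_simps)
      finally have da: "a1 \<le> a2" using lt by (simp add: zero_le_mult_iff)
      have "0 \<le> (1 - \<mu>2) * E1 - (1 - \<mu>1) * E2"
        using mult_nonneg_nonneg[OF _ E1, of "1 - \<mu>2"] mult_nonneg_nonpos[OF _ E2, of "1 - \<mu>1"] m1 m2 by linarith
      also have "(1 - \<mu>2) * E1 - (1 - \<mu>1) * E2 = (\<mu>1 - \<mu>2) * (b2 - b1)"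
        unfolding E1_def E2_def by (simp add: algebra_simps)
      finally have db: "b2 \<le> b1" using lt by (simp add: zero_le_mult_iff)
      show ?thesis using da db unfolding a1_def a2_def b1_def b2_def by simp
    qed
  qed
  have "psd (Pb2 - Pb1)" unfolding psd_def
    using P1(3) P2(3) key by (auto simp: psd_def transpose_diff matrix_vector_mult_diff_rdistrib inner_diff_right)
  moreover have "psd (Ph1 - Ph2)" unfolding psd_def
    using P1(4) P2(4) key by (auto simp: psd_def transpose_diff matrix_vector_mult_diff_rdistrib inner_diff_right)
  ultimately show ?thesis unfolding loewner_le_def Pb1_def Pb2_def Ph1_def Ph2_def by blast
qed

end
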